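(* Let $n\ge2$, let $P$ be a partial $n$-Metric on a set $X$, let $x_o,y_o\in X$ and let $f,g:X\to X$. Suppose there are real numbers $r$ and $0<c<1$ such that, with $M=\max\{|P(\langle f(x_o)\rangle^{n-1},y_o)|,|P(\langle x_o\rangle^{n-1},y_o)|\}$, for every natural number $i$: $$r\le\min\{P(\langle f^i(x_o)\rangle^n),P(\langle g^i(y_o)\rangle^n)\},\quad P(\langle f^{i+1}(x_o)\rangle^{n-1},g^i(y_o))\le r+c^iM,\quad P(\langle f^{i}(x_o)\rangle^{n-1},g^i(y_o))\le r+c^iM$$ (i.e. $f$ and $g$ are $f$-pairwise $c_r$-contractive over $(x_o,y_o)$). Then $\{f^i(x_o)\}_{i\in\mathbb{N}}$ and $\{g^i(y_o)\}_{i\in\mathbb{N}}$ form a Cauchy pair.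
   Context: Notation: $\langle a\rangle^k$ denotes the $k$-tuple $(a,\dots,a)$ inserted into an argument list; $f^0(x)=x$, $f^{i+1}(x)=f(f^i(x))$. A partial $n$-Metric on $X$ is a function $P:X^n\to\mathbb{R}$ such that for all $x_1,\dots,x_n,a\in X$: (1) $P(\langle x_1\rangle^n)\le P(\langle x_1\rangle^{n-1},x_2)$; (2) $P$ is invariant under permutations of its arguments; (3) $P(\langle x_1\rangle^{n-1},x_2)=P(\langle x_1\rangle^n)$ and $P(\langle x_2\rangle^{n-1},x_1)=P(\langle x_2\rangle^n)$ iff $x_1=x_2$; (4) $P(x_1,\dots,x_n)\le P(x_1,\dots,x_{n-1},a)+P(\langle a\rangle^{n-1},x_n)-P(\langle a\rangle^n)$. Two sequences $\{x_i\},\{y_i\}$ form a Cauchy pair if there is $r'\in\mathbb{R}$ such that for every $\epsilon>0$ there is $N$ with $r'-\epsilon<\min\{P(\langle x_i\rangle^n),P(\langle y_i\rangle^n)\}\le P(\langle x_i\rangle^{n-1},y_j)<r'+\epsilon$ for all $i,j>N$. *)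

theory Defs
  imports Complex_Main "HOL-Library.Multiset"
begin

text \<open>An n-tuple of elements of X is represented as a list of length n;
  the tuple (a,...,a) of length k is replicate k a.\<close>

definition partial_n_metric :: "nat \<Rightarrow> 'a set \<Rightarrow> ('a list \<Rightarrow> real) \<Rightarrow> bool" where
  "partial_n_metric n X P \<longleftrightarrow>
     (\<forall>x1\<in>X. \<forall>x2\<in>X. P (replicate n x1) \<le> P (replicate (n - 1) x1 @ [x2])) \<and>
     (\<forall>xs ys. length xs = n \<and> set xs \<subseteq> X \<and> mset ys = mset xs \<longrightarrow> P xs = P ys) \<and>
     (\<forall>x1\<in>X. \<forall>x2\<in>X.
        (P (replicate (n - 1) x1 @ [x2]) = P (replicate n x1) \<and>
         P (replicate (n - 1) x2 @ [x1]) = P (replicate n x2)) \<longleftrightarrow> x1 = x2) \<and>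
     (\<forall>xs a. length xs = n \<and> set xs \<subseteq> X \<and> a \<in> X \<longrightarrow>
        P xs \<le> P (butlast xs @ [a]) + P (replicate (n - 1) a @ [last xs]) - P (replicate n a))"

definition cauchy_pair :: "nat \<Rightarrow> ('a list \<Rightarrow> real) \<Rightarrow> (nat \<Rightarrow> 'a) \<Rightarrow> (nat \<Rightarrow> 'a) \<Rightarrow> bool" where
  "cauchy_pair n P x y \<longleftrightarrow>
     (\<exists>r'::real. \<forall>\<epsilon>>0. \<exists>N::nat. \<forall>i j. i > N \<and> j > N \<longrightarrow>
        r' - \<epsilon> < min (P (replicate n (x i))) (P (replicate n (y i))) \<and>
        min (P (replicate n (x i))) (P (replicate n (y i))) \<le> P (replicate (n - 1) (x i) @ [y j]) \<and>
        P (replicate (n - 1) (x i) @ [y j]) < r' + \<epsilon>)"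

end

theory Submission
  imports Defs
begin


lemma mset_snoc_cons: "mset (L @ [x]) = mset (x # L)"
  by (metis mset_append union_commute append_Cons append_Nil)

lemma pnm_perm:
  assumes "partial_n_metric n X P" "length xs = n" "set xs \<subseteq> X" "mset ys = mset xs"
  shows "P xs = P ys"
  using assms unfolding partial_n_metric_def by blast

lemma pnm_tri4:
  assumes "partial_n_metric n X P" "length xs = n" "set xs \<subseteq> X" "a \<in> X"
  shows "P xs \<le> P (butlast xs @ [a]) + P (replicate (n - 1) a @ [last xs]) - P (replicate n a)"
  using assms unfolding partial_n_metric_def by blast

lemma pnm_tri:
  assumes "partial_n_metric n X P" "n \<ge> 1" "x \<in> X" "y \<in> X" "z \<in> X"
  shows "P (replicate (n - 1) x @ [y]) \<le> P (replicate (n - 1) x @ [z]) + P (replicate (n - 1) z @ [y]) - P (replicate n z)"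
proof -
  have "set (replicate (n - 1) x) \<subseteq> X" using assms by (auto simp: set_replicate_conv_if)
  then show ?thesis using pnm_tri4[OF assms(1), of "replicate (n - 1) x @ [y]" z] assms by auto
qed

lemma pnm_mono:
  assumes "partial_n_metric n X P" "x \<in> X" "y \<in> X"
  shows "P (replicate n x) \<le> P (replicate (n - 1) x @ [y])"
  using assms unfolding partial_n_metric_def by blast

lemma pnm_swapQ:
  assumes "partial_n_metric n X P" "x \<in> X" "y \<in> X" "k \<le> n - 1"
  shows "P (replicate k x @ replicate (n - k) y) \<le> P (replicate n y) + real k * (P (replicate (n - 1) y @ [x]) - P (replicate n y))"
  using assms(4)
proof (induction k)
  case 0
  then show ?case by simp
next
  case (Suc k)
  define xs where "xs = replicate k x @ replicate (n - Suc k) y @ [x]"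
  have len: "length xs = n" using Suc.prems unfolding xs_def by auto
  have setx: "set xs \<subseteq> X" using assms(2,3) unfolding xs_def by auto
  have bl: "butlast xs @ [y] = replicate k x @ replicate (n - k) y"
  proof -
    have "butlast xs = replicate k x @ replicate (n - Suc k) y" unfolding xs_def
      by (simp add: butlast_append)
    moreover have "replicate (n - Suc k) y @ [y] = replicate (n - k) y"
      proof -
      have "n - k = Suc (n - Suc k)" using Suc.prems by simp
      thus ?thesis by (simp add: replicate_append_same)
    qed
    ultimately show ?thesis by simp
  qed
  have lst: "last xs = x" unfolding xs_def by simp
  have "P xs \<le> P (butlast xs @ [y]) + P (replicate (n - 1) y @ [last xs]) - P (replicate n y)"
    by (rule pnm_tri4[OF assms(1) len setx assms(3)])
  hence 1: "P xs \<le> P (replicate k x @ replicate (n - k) y) + P (replicate (n - 1) y @ [x]) - P (replicate n y)"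
    using bl lst by simp
  have "mset (replicate (Suc k) x @ replicate (n - Suc k) y) = mset xs"
  proof -
    have "xs = (replicate k x @ replicate (n - Suc k) y) @ [x]" unfolding xs_def by (simp only: append_assoc)
    hence "mset xs = mset (x # (replicate k x @ replicate (n - Suc k) y))"
      using mset_snoc_cons by metis
    moreover have "replicate (Suc k) x @ replicate (n - Suc k) y = x # (replicate k x @ replicate (n - Suc k) y)"
      by (simp only: replicate_Suc append_Cons)
    ultimately show ?thesis by metis
  qed
  hence "P xs = P (replicate (Suc k) x @ replicate (n - Suc k) y)"
    by (rule pnm_perm[OF assms(1) len setx])
  moreover have "P (replicate k x @ replicate (n - k) y) \<le> P (replicate n y) + real k * (P (replicate (n - 1) y @ [x]) - P (replicate n y))"
    using Suc.IH Suc.prems by linarith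
  moreover have "real (Suc k) * (P (replicate (n - 1) y @ [x]) - P (replicate n y)) = real k * (P (replicate (n - 1) y @ [x]) - P (replicate n y)) + (P (replicate (n - 1) y @ [x]) - P (replicate n y))"
    by (simp add: distrib_right)
  ultimately show ?case using 1 by linarith
qed

lemma pnm_swap:
  assumes "partial_n_metric n X P" "x \<in> X" "y \<in> X" "n \<ge> 1"
  shows "P (replicate (n - 1) x @ [y]) \<le> P (replicate n y) + real (n - 1) * (P (replicate (n - 1) y @ [x]) - P (replicate n y))"
proof -
  have "P (replicate (n - 1) x @ replicate (n - (n - 1)) y) \<le> P (replicate n y) + real (n - 1) * (P (replicate (n - 1) y @ [x]) - P (replicate n y))"
    by (rule pnm_swapQ[OF assms(1-3)]) simp
  moreover have "n - (n - 1) = 1" using assms(4) by simp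
  ultimately show ?thesis by simp
qed

lemma pnm_swapD:
  assumes "partial_n_metric n X P" "x \<in> X" "y \<in> X" "n \<ge> 2"
    and "r \<le> P (replicate n y)"
  shows "P (replicate (n - 1) x @ [y]) - r \<le> real n * (P (replicate (n - 1) y @ [x]) - r)"
proof -
  have sw: "P (replicate (n - 1) x @ [y]) \<le> P (replicate n y) + real (n - 1) * (P (replicate (n - 1) y @ [x]) - P (replicate n y))"
    using pnm_swap[OF assms(1-3)] assms(4) by simp
  have mo: "P (replicate n y) \<le> P (replicate (n - 1) y @ [x])" by (rule pnm_mono[OF assms(1,3,2)])
  define s where "s = P (replicate n y)"
  define t where "t = P (replicate (n - 1) y @ [x])"
  have rn: "real (n - 1) = real n - 1" using assms(4) by simp
  have "real n \<ge> 2" using assms(4) by simp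
  have A: "real (n - 1) * (t - s) = (real n - 1) * (t - r) - (real n - 1) * (s - r)"
    unfolding rn by (simp add: algebra_simps)
  have B: "(real n - 1) * (s - r) \<ge> s - r"
  proof -
    have "0 \<le> (real n - 2) * (s - r)"
      using \<open>real n \<ge> 2\<close> assms(5) s_def by simp
    moreover have "(real n - 1) * (s - r) = (real n - 2) * (s - r) + (s - r)"
      by (simp add: algebra_simps)
    ultimately show ?thesis by linarith
  qed
  have C: "(real n - 1) * (t - r) \<le> real n * (t - r)"
    using mo assms(5) s_def t_def by (simp add: algebra_simps)
  show ?thesis using sw[folded s_def t_def] A B C unfolding t_def[symmetric] by linarith
qed

theorem theorem5p13:
  fixes n :: nat and X :: "'a set" and P :: "'a list \<Rightarrow> real"
    and f g :: "'a \<Rightarrow> 'a" and xo yo :: 'a and r c M :: real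
  assumes "n \<ge> 2"
    and "partial_n_metric n X P"
    and "xo \<in> X" and "yo \<in> X"
    and "\<forall>x\<in>X. f x \<in> X" and "\<forall>x\<in>X. g x \<in> X"
    and "0 < c" and "c < 1"
    and "M = max \<bar>P (replicate (n - 1) (f xo) @ [yo])\<bar> \<bar>P (replicate (n - 1) xo @ [yo])\<bar>"
    and "\<forall>i::nat. r \<le> min (P (replicate n ((f ^^ i) xo))) (P (replicate n ((g ^^ i) yo)))"
    and "\<forall>i::nat. P (replicate (n - 1) ((f ^^ Suc i) xo) @ [(g ^^ i) yo]) \<le> r + c ^ i * M"
    and "\<forall>i::nat. P (replicate (n - 1) ((f ^^ i) xo) @ [(g ^^ i) yo]) \<le> r + c ^ i * M"
  shows "cauchy_pair n P (\<lambda>i. (f ^^ i) xo) (\<lambda>i. (g ^^ i) yo)"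
proof -
  note pm = assms(2)
  define a where "a i = (f ^^ i) xo" for i
  define b where "b i = (g ^^ i) yo" for i
  define D where "D u v = P (replicate (n - 1) u @ [v]) - r" for u v
  have aX: "a i \<in> X" for i unfolding a_def by (induction i) (use assms(3,5) in auto)
  have bX: "b i \<in> X" for i unfolding b_def by (induction i) (use assms(4,6) in auto)
  have ra: "r \<le> P (replicate n (a i))" for i using assms(10) unfolding a_def by auto
  have rb: "r \<le> P (replicate n (b i))" for i using assms(10) unfolding b_def by auto
  have M0: "M \<ge> 0" unfolding assms(9) by (metis abs_ge_zero max.coboundedI1)
  have h1: "D (a (Suc i)) (b i) \<le> c ^ i * M" for i unfolding a_def b_def D_def using assms(11)[rule_format, of i] by linarith
  have h2: "D (a i) (b i) \<le> c ^ i * M" for i unfolding a_def b_def D_def using assms(12)[rule_format, of i] by linarith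
  have tri: "D u w \<le> D u z + D z w" if "u \<in> X" "w \<in> X" "z \<in> X" "r \<le> P (replicate n z)" for u w z
    using pnm_tri[OF pm _ that(1,2,3)] assms(1) that(4) unfolding D_def by simp
  have swp: "D u v \<le> real n * D v u" if "u \<in> X" "v \<in> X" "r \<le> P (replicate n v)" for u v
    using pnm_swapD[OF pm that(1,2) assms(1) that(3)] unfolding D_def by simp
  have Dnn: "D u v \<ge> 0" if "u \<in> X" "v \<in> X" "r \<le> P (replicate n u)" for u v
    using pnm_mono[OF pm that(1,2)] that(3) unfolding D_def by simp
  define L where "L = real n + 1"
  have cp: "c ^ Suc k \<le> c ^ k" for k using assms(7,8) by (simp add: power_decreasing)
  have bb: "D (b k) (b (Suc k)) \<le> L * (c ^ k * M)" for k
  proof -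
    have "D (b k) (b (Suc k)) \<le> D (b k) (a (Suc k)) + D (a (Suc k)) (b (Suc k))"
      by (rule tri[OF bX bX aX ra])
    moreover have "D (b k) (a (Suc k)) \<le> real n * D (a (Suc k)) (b k)"
      by (rule swp[OF bX aX ra])
    moreover have "real n * D (a (Suc k)) (b k) \<le> real n * (c ^ k * M)"
      using h1 by (simp add: mult_left_mono)
    moreover have "D (a (Suc k)) (b (Suc k)) \<le> c ^ k * M"
      using h2[of "Suc k"] cp[of k] M0 by (meson mult_right_mono order.trans)
    ultimately have "D (b k) (b (Suc k)) \<le> real n * (c ^ k * M) + c ^ k * M" by linarith
    thus ?thesis unfolding L_def by (simp add: algebra_simps)
  qed
  have aa: "D (a (Suc k)) (a k) \<le> L * (c ^ k * M)" for k
  proof -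
    have "D (a (Suc k)) (a k) \<le> D (a (Suc k)) (b k) + D (b k) (a k)"
      by (rule tri[OF aX aX bX rb])
    moreover have "D (b k) (a k) \<le> real n * D (a k) (b k)"
      by (rule swp[OF bX aX ra])
    moreover have "real n * D (a k) (b k) \<le> real n * (c ^ k * M)"
      using h2 by (simp add: mult_left_mono)
    ultimately have "D (a (Suc k)) (a k) \<le> real n * (c ^ k * M) + c ^ k * M" using h1[of k] by linarith
    thus ?thesis unfolding L_def by (simp add: algebra_simps)
  qed
  define G where "G m d = (c ^ m - c ^ (m + d)) / (1 - c)" for m d
  have Gs: "G m (Suc d) = G m d + c ^ (m + d)" for m d
    unfolding G_def using assms(8) by (simp add: field_simps)
  have Gb: "G m d \<le> c ^ m / (1 - c)" for m d
    unfolding G_def using assms(7,8) by (simp add: divide_right_mono)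
  have L0: "L \<ge> 0" unfolding L_def by simp
  have A: "D (a i) (b (i + d)) \<le> c ^ i * M + L * M * G i d" for i d
  proof (induction d)
    case 0
    then show ?case using h2[of i] by (simp add: G_def)
  next
    case (Suc d)
    have "D (a i) (b (i + Suc d)) \<le> D (a i) (b (i + d)) + D (b (i + d)) (b (Suc (i + d)))"
      using tri[OF aX bX bX rb] by simp
    also have "\<dots> \<le> c ^ i * M + L * M * G i d + L * (c ^ (i + d) * M)"
      using Suc.IH bb[of "i + d"] by linarith
    also have "\<dots> = c ^ i * M + L * M * G i (Suc d)" using Gs by (simp add: algebra_simps)
    finally show ?case .
  qed
  have B: "D (a (j + d)) (b j) \<le> c ^ j * M + L * M * G j d" for j d
  proof (induction d)
    case 0
    then show ?case using h2[of j] by (simp add: G_def)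
  next
    case (Suc d)
    have "D (a (j + Suc d)) (b j) \<le> D (a (Suc (j + d))) (a (j + d)) + D (a (j + d)) (b j)"
      using tri[OF aX bX aX ra] by simp
    also have "\<dots> \<le> c ^ j * M + L * M * G j d + L * (c ^ (j + d) * M)"
      using Suc.IH aa[of "j + d"] by linarith
    also have "\<dots> = c ^ j * M + L * M * G j (Suc d)" using Gs by (simp add: algebra_simps)
    finally show ?case .
  qed
  define K where "K = M * (1 + L / (1 - c))"
  have K0: "K \<ge> 0" unfolding K_def using M0 L0 assms(8) by simp
  have main: "D (a i) (b j) \<le> c ^ min i j * K" for i j
  proof (cases "i \<le> j")
    case True
    then obtain d where d: "j = i + d" using le_Suc_ex by blast
    have "L * M * G i d \<le> L * M * (c ^ i / (1 - c))"
      by (rule mult_left_mono[OF Gb]) (use L0 M0 in simp)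
    hence "D (a i) (b j) \<le> c ^ i * M + L * M * (c ^ i / (1 - c))" using A[of i d] unfolding d by linarith
    also have "\<dots> = c ^ i * K" unfolding K_def by (simp add: algebra_simps)
    finally show ?thesis using True by simp
  next
    case False
    then obtain d where d: "i = j + d" using le_Suc_ex[of j i] by auto
    have "L * M * G j d \<le> L * M * (c ^ j / (1 - c))"
      by (rule mult_left_mono[OF Gb]) (use L0 M0 in simp)
    hence "D (a i) (b j) \<le> c ^ j * M + L * M * (c ^ j / (1 - c))" using B[of j d] unfolding d by linarith
    also have "\<dots> = c ^ j * K" unfolding K_def by (simp add: algebra_simps)
    finally show ?thesis using False by simp
  qed
  show ?thesis unfolding cauchy_pair_def
  proof (intro exI[of _ r] allI impI)
    fix e :: real assume e: "e > 0"
    have ep: "e / (K + 1) > 0" using e K0 by simp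
    obtain N where N: "c ^ N < e / (K + 1)"
      using real_arch_pow_inv[OF ep assms(8)] by blast
    show "\<exists>N. \<forall>i j. N < i \<and> N < j \<longrightarrow>
             r - e < min (P (replicate n ((f ^^ i) xo))) (P (replicate n ((g ^^ i) yo))) \<and>
             min (P (replicate n ((f ^^ i) xo))) (P (replicate n ((g ^^ i) yo))) \<le> P (replicate (n - 1) ((f ^^ i) xo) @ [(g ^^ j) yo]) \<and>
             P (replicate (n - 1) ((f ^^ i) xo) @ [(g ^^ j) yo]) < r + e"
    proof (intro exI[of _ N] allI impI conjI)
      fix i j assume ij: "N < i \<and> N < j"
      show "r - e < min (P (replicate n ((f ^^ i) xo))) (P (replicate n ((g ^^ i) yo)))"
      proof -
        have "r \<le> min (P (replicate n ((f ^^ i) xo))) (P (replicate n ((g ^^ i) yo)))"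
          using assms(10) by blast
        thus ?thesis using e by linarith
      qed
      have "P (replicate n (a i)) \<le> P (replicate (n - 1) (a i) @ [b j])" by (rule pnm_mono[OF pm aX bX])
      then show "min (P (replicate n ((f ^^ i) xo))) (P (replicate n ((g ^^ i) yo))) \<le> P (replicate (n - 1) ((f ^^ i) xo) @ [(g ^^ j) yo])"
        unfolding a_def b_def by linarith
      have "c ^ min i j \<le> c ^ N" using ij assms(7,8) by (intro power_decreasing) auto
      hence "c ^ min i j * K \<le> c ^ N * K" using K0 by (simp add: mult_right_mono)
      also have "\<dots> \<le> c ^ N * (K + 1)" using assms(7) by simp
      also have "\<dots> < e" using N K0 by (simp add: pos_less_divide_eq mult.commute)
      finally have "D (a i) (b j) < e" using main[of i j] by linarith
      then show "P (replicate (n - 1) ((f ^^ i) xo) @ [(g ^^ j) yo]) < r + e"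
        unfolding D_def a_def b_def by simp
    qed
  qed
qed

end
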